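(* For every positive integer $n$, $$\sum_{j=1}^{n}\csc^6\left(\frac{\pi j}{2n+1}\right) = \frac{8(n+1)n(8n^4+16n^3+35n^2+27n+54)}{945}.$$ *)

theory Defs
  imports Complex_Main
begin

end

theory Submission
  imports Defs "HOL-Computational_Algebra.Polynomial"
begin


lemma im_pow:
  fixes t :: real
  shows "Im ((complex_of_real t + \<i>) ^ (2*n+1)) =
     (\<Sum>k\<le>n. (-1)^k * real ((2*n+1) choose (2*k+1)) * (t^2)^(n-k))"
proof -
  have "(complex_of_real t + \<i>) ^ (2*n+1) = (\<i> + complex_of_real t) ^ (2*n+1)" by (simp add: add.commute)
  also have "\<dots> = (\<Sum>l\<le>Suc (2*n). of_nat ((2*n+1) choose l) * \<i>^l * complex_of_real t ^ (2*n+1-l))"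
    unfolding binomial_ring[of "\<i>" "complex_of_real t" "2*n+1"] by simp
  also have "\<dots> = (\<Sum>k\<le>n. of_nat ((2*n+1) choose (2*k)) * \<i>^(2*k) * complex_of_real t ^ (2*n+1-2*k)
        + of_nat ((2*n+1) choose (Suc (2*k))) * \<i>^(Suc (2*k)) * complex_of_real t ^ (2*n+1-Suc (2*k)))"
    by (rule sum.in_pairs_0)
  finally have e: "(complex_of_real t + \<i>) ^ (2*n+1) = \<dots>" .
  have "Im (of_nat ((2*n+1) choose (2*k)) * \<i>^(2*k) * complex_of_real t ^ (2*n+1-2*k)
        + of_nat ((2*n+1) choose (Suc (2*k))) * \<i>^(Suc (2*k)) * complex_of_real t ^ (2*n+1-Suc (2*k)))
     = (-1)^k * real ((2*n+1) choose (2*k+1)) * (t^2)^(n-k)" if "k \<le> n" for k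
  proof -
    have i2: "\<i>^(2*k) = (-1::complex)^k" by (simp add: power_mult)
    have i3: "\<i>^(Suc(2*k)) = \<i> * (-1::complex)^k" by (simp add: power_mult)
    have ex: "2*n+1-Suc(2*k) = 2*(n-k)" using that by simp
    have r1: "of_nat ((2*n+1) choose (2*k)) * \<i>^(2*k) * complex_of_real t ^ (2*n+1-2*k)
       = complex_of_real (real ((2*n+1) choose (2*k)) * (-1)^k * t^(2*n+1-2*k))"
      by (simp add: i2)
    have r2: "of_nat ((2*n+1) choose (Suc (2*k))) * \<i>^(Suc (2*k)) * complex_of_real t ^ (2*n+1-Suc (2*k))
       = \<i> * complex_of_real ((-1)^k * real ((2*n+1) choose (2*k+1)) * (t^2)^(n-k))"
      unfolding ex i3 power_mult by simp
    show ?thesis unfolding r1 r2 by simp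
  qed
  then show ?thesis unfolding e Im_sum by (intro sum.cong) auto
qed


lemma b3: "real ((2*n+1) choose 3) = (2*real n+1)*(2*real n)*(2*real n-1)/6"
  apply (simp add: binomial_gbinomial gbinomial_pochhammer' pochhammer_Suc_prod numeral_eq_Suc)
  apply (simp add: field_simps)
  done
lemma b5: "real ((2*n+1) choose 5) = (2*real n+1)*(2*real n)*(2*real n-1)*(2*real n-2)*(2*real n-3)/120"
  apply (simp add: binomial_gbinomial gbinomial_pochhammer' pochhammer_Suc_prod numeral_eq_Suc)
  apply (simp add: field_simps)
  done
lemma b7: "real ((2*n+1) choose 7) = (2*real n+1)*(2*real n)*(2*real n-1)*(2*real n-2)*(2*real n-3)*(2*real n-4)*(2*real n-5)/5040"
  apply (simp add: binomial_gbinomial gbinomial_pochhammer' pochhammer_Suc_prod numeral_eq_Suc)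
  apply (simp add: field_simps)
  done


lemma coeff_lin_mult: "coeff ([:-y, 1:] * Q) (Suc i) = coeff Q i - y * coeff Q (Suc i)"
  for Q :: "real poly"
  by (simp add: mult_pCons_left)

lemma vieta3:
  fixes x :: "'b \<Rightarrow> real"
  assumes "finite A"
  shows "(\<forall>i>card A+3. coeff (monom 1 3 * (\<Prod>a\<in>A. [:- x a, 1:])) i = 0)
   \<and> coeff (monom 1 3 * (\<Prod>a\<in>A. [:- x a, 1:])) (card A+3) = 1
   \<and> coeff (monom 1 3 * (\<Prod>a\<in>A. [:- x a, 1:])) (card A+2) = - (\<Sum>a\<in>A. x a)
   \<and> coeff (monom 1 3 * (\<Prod>a\<in>A. [:- x a, 1:])) (card A+1) =
       ((\<Sum>a\<in>A. x a)^2 - (\<Sum>a\<in>A. x a^2))/2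
   \<and> coeff (monom 1 3 * (\<Prod>a\<in>A. [:- x a, 1:])) (card A) =
       - ((\<Sum>a\<in>A. x a)^3 - 3*(\<Sum>a\<in>A. x a)*(\<Sum>a\<in>A. x a^2) + 2*(\<Sum>a\<in>A. x a^3))/6"
  using assms
proof (induction A rule: finite_induct)
  case empty
  then show ?case by (auto simp: coeff_monom numeral_eq_Suc)
next
  case (insert b A)
  define Q where "Q = monom 1 3 * (\<Prod>a\<in>A. [:- x a, 1:])"
  define d where "d = card A"
  have Q': "monom 1 3 * (\<Prod>a\<in>insert b A. [:- x a, 1:]) = [:- x b, 1:] * Q"
    using insert by (simp add: Q_def mult_ac)
  have cd: "card (insert b A) = Suc d" using insert by (simp add: d_def)
  have IH: "(\<forall>i>d+3. coeff Q i = 0)" "coeff Q (d+3) = 1" "coeff Q (d+2) = - (\<Sum>a\<in>A. x a)"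
     "coeff Q (d+1) = ((\<Sum>a\<in>A. x a)^2 - (\<Sum>a\<in>A. x a^2))/2"
     "coeff Q d = - ((\<Sum>a\<in>A. x a)^3 - 3*(\<Sum>a\<in>A. x a)*(\<Sum>a\<in>A. x a^2) + 2*(\<Sum>a\<in>A. x a^3))/6"
    using insert.IH by (simp_all add: Q_def d_def)
  have s: "(\<Sum>a\<in>insert b A. f a) = f b + (\<Sum>a\<in>A. f a)" for f :: "'b \<Rightarrow> real"
    using insert by simp
  have c1: "\<forall>i>Suc d+3. coeff ([:- x b, 1:] * Q) i = 0"
  proof (intro allI impI)
    fix i assume "i > Suc d + 3"
    then obtain i' where "i = Suc i'" "i' > d+3" by (cases i) auto
    then show "coeff ([:- x b, 1:] * Q) i = 0" using IH(1) by (simp add: coeff_lin_mult)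
  qed
  have c2: "coeff ([:- x b, 1:] * Q) (Suc d+3) = 1"
  proof -
    have "Suc d + 3 = Suc (d+3)" by simp
    then show ?thesis using IH(1,2) by (simp only: coeff_lin_mult)
  qed
  have c3: "coeff ([:- x b, 1:] * Q) (Suc d+2) = - (\<Sum>a\<in>insert b A. x a)"
    using IH(2,3) unfolding s by (simp add: coeff_lin_mult numeral_eq_Suc)
  have c4: "coeff ([:- x b, 1:] * Q) (Suc d+1) = ((\<Sum>a\<in>insert b A. x a)^2 - (\<Sum>a\<in>insert b A. x a^2))/2"
    using IH(3,4) unfolding s by (simp add: coeff_lin_mult numeral_eq_Suc field_simps power2_eq_square)
  have c5: "coeff ([:- x b, 1:] * Q) (Suc d) = - ((\<Sum>a\<in>insert b A. x a)^3 - 3*(\<Sum>a\<in>insert b A. x a)*(\<Sum>a\<in>insert b A. x a^2) + 2*(\<Sum>a\<in>insert b A. x a^3))/6" (is "_ = ?R")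
  proof -
    have "coeff ([:- x b, 1:] * Q) (Suc d) = coeff Q d - x b * coeff Q (Suc d)" by (rule coeff_lin_mult)
    also have "\<dots> = - ((\<Sum>a\<in>A. x a)^3 - 3*(\<Sum>a\<in>A. x a)*(\<Sum>a\<in>A. x a^2) + 2*(\<Sum>a\<in>A. x a^3))/6
        - x b * (((\<Sum>a\<in>A. x a)^2 - (\<Sum>a\<in>A. x a^2))/2)"
      using IH(4,5) by (simp only: Suc_eq_plus1)
    also have "\<dots> = ?R" unfolding s by (simp add: field_simps power2_eq_square power3_eq_cube)
    finally show ?thesis .
  qed
  show ?case unfolding Q' cd using c1 c2 c3 c4 c5 by simp
qed


lemma root_lemma:
  fixes n j :: nat
  assumes "sin th \<noteq> 0" and "real (2*n+1) * th = pi * real j"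
  shows "Im ((complex_of_real (cot th) + \<i>) ^ (2*n+1)) = 0"
proof -
  have "complex_of_real (cot th) + \<i> = cis th / complex_of_real (sin th)"
    using assms(1) by (simp add: complex_eq_iff cot_def)
  then have "(complex_of_real (cot th) + \<i>) ^ (2*n+1) = cis (real (2*n+1) * th) / complex_of_real (sin th ^ (2*n+1))"
    by (simp only: power_divide DeMoivre of_real_power)
  also have "\<dots> = cis (pi * real j) / complex_of_real (sin th ^ (2*n+1))"
    using assms(2) by simp
  finally show ?thesis by simp
qed

lemma cc_coeff:
  fixes cc :: "nat \<Rightarrow> real"
  assumes "k0 \<le> n"
  shows "coeff (\<Sum>k\<le>n. monom (cc k) (n-k)) (n-k0) = cc k0"
proof -
  have "coeff (\<Sum>k\<le>n. monom (cc k) (n-k)) (n-k0) = (\<Sum>k\<le>n. if k = k0 then cc k else 0)"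
    unfolding coeff_sum coeff_monom using assms by (intro sum.cong) auto
  also have "\<dots> = cc k0" using assms by simp
  finally show ?thesis .
qed


theorem mainTheorem13:
  fixes n :: nat
  assumes "n \<ge> 1"
  shows "(\<Sum>j=1..n. 1 / (sin (pi * real j / real (2*n+1))) ^ 6)
         = 8 * (real n + 1) * real n * (8 * real n ^ 4 + 16 * real n ^ 3 + 35 * real n ^ 2 + 27 * real n + 54) / 945"
proof -
  define th where "th j = pi * real j / real (2*n+1)" for j :: nat
  define c where "c j = cot (th j) ^ 2" for j :: nat
  define cc where "cc k = (-1)^k * real ((2*n+1) choose (2*k+1))" for k :: nat
  define p where "p = (\<Sum>k\<le>n. monom (cc k) (n-k))"
  define q where "q = (\<Prod>j\<in>{1..n}. [:- c j, 1:])"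
  define M where "M = real (2*n+1)"
  have Mpos: "M > 0" by (simp add: M_def)
  have thb: "0 < th j \<and> th j < pi/2" if "j \<in> {1..n}" for j
  proof -
    have "2 * real j < real (2*n+1)" using that by simp
    then have "pi * (2 * real j) < pi * real (2*n+1)"
      by (intro mult_strict_left_mono) auto
    then have "pi * real j / real (2*n+1) < pi/2"
      by (simp add: divide_less_eq field_simps)
    then show ?thesis using that by (simp add: th_def)
  qed
  have sinpos: "sin (th j) > 0" if "j \<in> {1..n}" for j
    using thb[OF that] by (intro sin_gt_zero2) auto
  have csc: "1 / sin (th j) ^ 6 = (1 + c j) ^ 3" if "j \<in> {1..n}" for j
  proof -
    have "sin (th j) \<noteq> 0" using sinpos[OF that] by simp
    then have "1 + c j = 1 / sin (th j) ^ 2"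
      unfolding c_def cot_def by (simp add: field_simps power2_eq_square)
    then show ?thesis by (simp add: power_divide flip: power_mult)
  qed
  have roots: "poly p (c j) = 0" if "j \<in> {1..n}" for j
  proof -
    have "Im ((complex_of_real (cot (th j)) + \<i>) ^ (2*n+1)) = 0"
      using sinpos[OF that] by (intro root_lemma[where j=j]) (auto simp: th_def)
    then show ?thesis unfolding im_pow p_def poly_sum poly_monom c_def cc_def by simp
  qed
  have inj: "inj_on c {1..n}"
  proof (rule inj_onI)
    fix i j assume i: "i \<in> {1..n}" and j: "j \<in> {1..n}" and e: "c i = c j"
    have "1 / sin (th i) ^ 2 = 1 / sin (th j) ^ 2"
    proof -
      have "1 / sin (th i) ^ 6 = 1 / sin (th j) ^ 6" using csc[OF i] csc[OF j] e by simp
      then have "sin (th i) ^ 6 = sin (th j) ^ 6" by simp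
      then have "sin (th i) = sin (th j)"
        using sinpos[OF i] sinpos[OF j] by (simp add: power_eq_iff_eq_base)
      then show ?thesis by simp
    qed
    then have "sin (th i) = sin (th j)"
      using sinpos[OF i] sinpos[OF j] by (simp add: power_eq_iff_eq_base)
    moreover have "th i = th j"
    proof (rule ccontr)
      assume "th i \<noteq> th j"
      then consider "th i < th j" | "th j < th i" by linarith
      then show False
        using thb[OF i] thb[OF j] \<open>sin (th i) = sin (th j)\<close> sin_monotone_2pi[of "th i" "th j"] sin_monotone_2pi[of "th j" "th i"]
        by (cases; auto)
    qed
    then show "i = j" by (simp add: th_def)
  qed
  have V: "(\<forall>i>card {1..n}+3. coeff (monom 1 3 * q) i = 0)
   \<and> coeff (monom 1 3 * q) (card {1..n}+3) = 1
   \<and> coeff (monom 1 3 * q) (card {1..n}+2) = - (\<Sum>a\<in>{1..n}. c a)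
   \<and> coeff (monom 1 3 * q) (card {1..n}+1) =
       ((\<Sum>a\<in>{1..n}. c a)^2 - (\<Sum>a\<in>{1..n}. c a^2))/2
   \<and> coeff (monom 1 3 * q) (card {1..n}) =
       - ((\<Sum>a\<in>{1..n}. c a)^3 - 3*(\<Sum>a\<in>{1..n}. c a)*(\<Sum>a\<in>{1..n}. c a^2) + 2*(\<Sum>a\<in>{1..n}. c a^3))/6"
    unfolding q_def by (rule vieta3) simp
  define S1 where "S1 = (\<Sum>a\<in>{1..n}. c a)"
  define S2 where "S2 = (\<Sum>a\<in>{1..n}. c a^2)"
  define S3 where "S3 = (\<Sum>a\<in>{1..n}. c a^3)"
  have V1: "\<forall>i>n+3. coeff (monom 1 3 * q) i = 0" and V2: "coeff (monom 1 3 * q) (n+3) = 1"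
    and V3: "coeff (monom 1 3 * q) (n+2) = - S1"
    and V4: "coeff (monom 1 3 * q) (n+1) = (S1^2 - S2)/2"
    and V5: "coeff (monom 1 3 * q) n = - (S1^3 - 3*S1*S2 + 2*S3)/6"
    using V by (simp_all add: S1_def S2_def S3_def)
  have q1: "coeff q i = 0" if "i > n" for i
    using V1[rule_format, of "i+3"] that by (simp add: coeff_monom_mult)
  have q2: "coeff q n = 1"
    using V2 by (simp add: coeff_monom_mult)
  have p1: "coeff p i = 0" if "i > n" for i
    unfolding p_def coeff_sum coeff_monom using that by (intro sum.neutral) auto
  have p2: "coeff p n = M"
    using cc_coeff[of 0 n cc] by (simp add: p_def cc_def M_def)
  have pq: "p = smult M q"
  proof (rule ccontr)
    define r where "r = p - smult M q"
    assume "p \<noteq> smult M q"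
    then have r0: "r \<noteq> 0" by (simp add: r_def)
    have rc: "coeff r i = 0" if "i \<ge> n" for i
    proof (cases "i = n")
      case True then show ?thesis by (simp add: r_def p2 q2)
    next
      case False then show ?thesis using that p1 q1 by (simp add: r_def)
    qed
    have dr: "degree r < n"
    proof (rule ccontr)
      assume "\<not> degree r < n"
      then have "coeff r (degree r) = 0" using rc by simp
      then show False using r0 by simp
    qed
    have "c ` {1..n} \<subseteq> {x. poly r x = 0}"
    proof
      fix x assume "x \<in> c ` {1..n}"
      then obtain j where j: "j \<in> {1..n}" "x = c j" by auto
      have "poly q (c j) = 0" unfolding q_def poly_prod
        using j(1) by (intro prod_zero) auto
      then show "x \<in> {x. poly r x = 0}" using roots[OF j(1)] j(2) by (simp add: r_def)
    qed
    then have "card (c ` {1..n}) \<le> card {x. poly r x = 0}"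
      by (intro card_mono poly_roots_finite r0)
    also have "\<dots> \<le> degree r" by (rule card_poly_roots_bound[OF r0])
    finally show False using dr card_image[OF inj] by simp
  qed
  have ccz: "cc k = 0" if "k > n" for k
  proof -
    have "(2*n+1) choose (2*k+1) = 0" using that by (intro binomial_eq_0) simp
    then show ?thesis by (simp only: cc_def)
  qed
  have cf: "coeff (monom 1 3 * p) (n+3-k0) = cc k0" if "k0 \<le> 3" for k0
  proof (cases "k0 \<le> n")
    case True
    then have "n+3-k0-3 = n - k0" by simp
    then show ?thesis using True that cc_coeff[of k0 n cc] by (simp add: coeff_monom_mult p_def)
  next
    case False
    then show ?thesis using ccz[of k0] by (simp add: coeff_monom_mult)
  qed
  have mp: "monom 1 3 * p = smult M (monom 1 3 * q)" by (simp add: pq)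
  have E1: "M * (- S1) = cc 1" proof -
    have "coeff (monom 1 3 * p) (n+2) = cc 1" using cf[of 1] by (simp add: numeral_eq_Suc)
    then show ?thesis unfolding mp coeff_smult V3 by simp
  qed
  have E2: "M * ((S1^2 - S2)/2) = cc 2" proof -
    have "coeff (monom 1 3 * p) (n+1) = cc 2" using cf[of 2] by (simp add: numeral_eq_Suc)
    then show ?thesis unfolding mp coeff_smult V4 by simp
  qed
  have E3: "M * (- (S1^3 - 3*S1*S2 + 2*S3)/6) = cc 3" proof -
    have "coeff (monom 1 3 * p) (n) = cc 3" using cf[of 3] by (simp add: numeral_eq_Suc)
    then show ?thesis unfolding mp coeff_smult V5 by simp
  qed
  have Md: "M = 2 * real n + 1" by (simp add: M_def)
  have h3: "(2::nat)*1+1 = 3" and h5: "(2::nat)*2+1 = 5" and h7: "(2::nat)*3+1 = 7" by simp_all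
  have cc1: "cc 1 = - real ((2*n+1) choose 3)" unfolding cc_def h3 by simp
  have cc2: "cc 2 = real ((2*n+1) choose 5)" unfolding cc_def h5 by simp
  have cc3: "cc 3 = - real ((2*n+1) choose 7)" unfolding cc_def h7 by simp
  have S1v: "S1 = real n*(2*real n-1)/3"
  proof -
    have "M * S1 = M * (real n*(2*real n-1)/3)"
      using E1 unfolding cc1 b3 by (simp add: Md field_simps)
    then show ?thesis using Mpos by simp
  qed
  have S2v: "S2 = S1^2 - 2*(2*real n*(2*real n-1)*(2*real n-2)*(2*real n-3)/120)"
  proof -
    have "M * (S1^2 - S2) = M * (2*(2*real n*(2*real n-1)*(2*real n-2)*(2*real n-3)/120))"
      using E2 unfolding cc2 b5 by (simp add: Md field_simps)
    then show ?thesis using Mpos by simp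
  qed
  have S3v: "S3 = (6*(2*real n*(2*real n-1)*(2*real n-2)*(2*real n-3)*(2*real n-4)*(2*real n-5)/5040) - S1^3 + 3*S1*S2)/2"
  proof -
    have "M * (S1^3 - 3*S1*S2 + 2*S3) = M * (6*(2*real n*(2*real n-1)*(2*real n-2)*(2*real n-3)*(2*real n-4)*(2*real n-5)/5040))"
      using E3 unfolding cc3 b7 by (simp add: Md field_simps)
    then have "S1^3 - 3*S1*S2 + 2*S3 = 6*(2*real n*(2*real n-1)*(2*real n-2)*(2*real n-3)*(2*real n-4)*(2*real n-5)/5040)"
      using Mpos by simp
    then show ?thesis by (simp add: field_simps)
  qed
  have "(\<Sum>j=1..n. 1 / (sin (pi * real j / real (2*n+1))) ^ 6) = (\<Sum>j=1..n. (1 + c j)^3)"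
    using csc by (simp add: th_def)
  also have "\<dots> = (\<Sum>j=1..n. 1 + 3 * c j + 3 * c j^2 + c j^3)"
    by (intro sum.cong) (simp_all add: power3_eq_cube power2_eq_square algebra_simps)
  also have "\<dots> = real n + 3*S1 + 3*S2 + S3"
    by (simp add: sum.distrib S1_def S2_def S3_def sum_distrib_left)
  also have "\<dots> = 8 * (real n + 1) * real n * (8 * real n ^ 4 + 16 * real n ^ 3 + 35 * real n ^ 2 + 27 * real n + 54) / 945"
    unfolding S3v S2v S1v by (simp add: field_simps power2_eq_square power3_eq_cube eval_nat_numeral)
  finally show ?thesis .
qed

end
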